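(* Let $f:\mathbb{Z}^n\to\mathbb{R}\cup\{+\infty\}$ be a function satisfying condition (SSQM$^\natural$) with $\arg\min f\neq\emptyset$, and let $x\in\mathrm{dom}\,f$. (i) Let $i\in N$ and suppose that the minimum of $f(x-\chi_i+\chi_{j'})$ over $j'\in N\cup\{0\}$ is attained by some $j\in N$ (i.e., $j\neq 0$). Then there exists a minimizer $x^*$ of $f$ satisfying $x^*(j)\ge x(j)+1$ if $j\in N\setminus\{i\}$, and $x^*(i)\ge x(i)$ if $j=i$. (ii) Let $j\in N$ and suppose that the minimum of $f(x-\chi_{i'}+\chi_j)$ over $i'\in N\cup\{0\}$ is attained by some $i\in N$ (i.e., $i\neq 0$). Then there exists a minimizer $x^*$ of $f$ satisfying $x^*(i)\le x(i)-1$ if $i\in N\setminus\{j\}$, and $x^*(j)\le x(j)$ if $i=j$. (iii) Suppose that the minimum of $f(x+\chi_{j'})$ over $j'\in N\cup\{0\}$ is attained by some $j\in N$ (i.e., $j\ne 0$). Then there exists a minimizer $x^*$ of $f$ satisfying $x^*(j)\ge x(j)+1$. (iv) Suppose that the minimum of $f(x-\chi_{i'})$ over $i'\in N\cup\{0\}$ is attained by some $i\in N$ (i.e., $i\neq 0$). Then there exists a minimizer $x^*$ of $f$ satisfying $x^*(i)\le x(i)-1$.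
   Context: $N=\{1,\dots,n\}$. For $i\in N$, $\chi_i\in\{0,1\}^n$ is the characteristic vector of $i$, and $\chi_0=0$. $\mathrm{dom}\,f=\{x\in\mathbb{Z}^n\mid f(x)<+\infty\}$. For $x,y\in\mathbb{Z}^n$, $\mathrm{supp}^+(x-y)=\{i\in N\mid x(i)>y(i)\}$ and $\mathrm{supp}^-(x-y)=\{j\in N\mid x(j)<y(j)\}$. Condition (SSQM$^\natural$): for all $x,y\in\mathrm{dom}\,f$ and all $i\in\mathrm{supp}^+(x-y)$ there exists $j\in\mathrm{supp}^-(x-y)\cup\{0\}$ such that at least one of the following holds: (a) $f(x-\chi_i+\chi_j)<f(x)$; (b) $f(y+\chi_i-\chi_j)<f(y)$; (c) $f(x-\chi_i+\chi_j)=f(x)$ and $f(y+\chi_i-\chi_j)=f(y)$. *)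

theory Defs
  imports Main "HOL-Library.Extended_Real" "HOL-Library.Function_Algebras"
begin

text \<open>Points of Z^n are functions from a finite index type 'n (playing the role of N) to int.
  The index set N \<union> {0} is modelled as 'n option, with None standing for 0.\<close>

definition chi :: "'n option \<Rightarrow> ('n \<Rightarrow> int)" where
  "chi j = (case j of None \<Rightarrow> (\<lambda>_. 0) | Some i \<Rightarrow> (\<lambda>k. if k = i then 1 else 0))"

definition dom_f :: "(('n \<Rightarrow> int) \<Rightarrow> ereal) \<Rightarrow> ('n \<Rightarrow> int) set" where
  "dom_f f = {x. f x < \<infinity>}"

definition argmin_f :: "(('n \<Rightarrow> int) \<Rightarrow> ereal) \<Rightarrow> ('n \<Rightarrow> int) set" where
  "argmin_f f = {x. \<forall>y. f x \<le> f y}"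

definition SSQM_nat :: "(('n \<Rightarrow> int) \<Rightarrow> ereal) \<Rightarrow> bool" where
  "SSQM_nat f \<longleftrightarrow>
     (\<forall>x\<in>dom_f f. \<forall>y\<in>dom_f f. \<forall>i. x i > y i \<longrightarrow>
        (\<exists>j. (j = None \<or> (\<exists>j'. j = Some j' \<and> x j' < y j')) \<and>
           (f (x - chi (Some i) + chi j) < f x \<or>
            f (y + chi (Some i) - chi j) < f y \<or>
            (f (x - chi (Some i) + chi j) = f x \<and> f (y + chi (Some i) - chi j) = f y))))"

end

theory Submission
  imports Defs
begin

lemma chi_app: "chi k j = (if k = Some j then 1 else 0)"
  by (cases k) (auto simp: chi_def)

lemma chi_None_add: "(x::'n \<Rightarrow> int) + chi None = x" "x - chi None = x"
  by (auto simp: chi_def)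

lemma up_lemma:
  fixes f :: "('n::finite \<Rightarrow> int) \<Rightarrow> ereal" and y :: "'n \<Rightarrow> int"
  assumes ssqm: "SSQM_nat f"
    and argmin_ne: "argmin_f f \<noteq> {}"
    and ydom: "f y < \<infinity>"
    and P: "\<forall>k. f y \<le> f (y - chi (Some j) + chi k)"
  shows "\<exists>xs\<in>argmin_f f. xs j \<ge> y j"
proof (rule ccontr)
  assume "\<not> ?thesis"
  hence lt: "\<forall>xs\<in>argmin_f f. xs j < y j" by auto
  obtain x0 where x0: "x0 \<in> argmin_f f" using argmin_ne by auto
  have step: "\<exists>xs'\<in>argmin_f f. xs' j = xs j + 1" if xs: "xs \<in> argmin_f f" for xs
  proof -
    have xsmin: "\<And>z. f xs \<le> f z" using xs by (auto simp: argmin_f_def)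
    have "f xs < \<infinity>" using xsmin[of y] ydom by auto
    moreover have "xs j < y j" using lt xs by auto
    ultimately obtain k where k: "k = None \<or> (\<exists>j'. k = Some j' \<and> y j' < xs j')"
      and c: "f (y - chi (Some j) + chi k) < f y \<or>
            f (xs + chi (Some j) - chi k) < f xs \<or>
            (f (y - chi (Some j) + chi k) = f y \<and> f (xs + chi (Some j) - chi k) = f xs)"
      using ssqm ydom unfolding SSQM_nat_def dom_f_def by blast
    have ne: "chi k j = 0" using k \<open>xs j < y j\<close> by (auto simp: chi_app)
    have "f (y - chi (Some j) + chi k) \<ge> f y" using P by auto
    moreover have "f (xs + chi (Some j) - chi k) \<ge> f xs" using xsmin by auto
    ultimately have e: "f (xs + chi (Some j) - chi k) = f xs" using c by auto
    have "xs + chi (Some j) - chi k \<in> argmin_f f"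
      using e xsmin by (auto simp: argmin_f_def)
    moreover have "(xs + chi (Some j) - chi k) j = xs j + 1" using ne by (simp add: chi_app)
    ultimately show ?thesis by blast
  qed
  have "\<exists>xs\<in>argmin_f f. xs j \<ge> x0 j + int n" for n
  proof (induction n)
    case 0 then show ?case using x0 by auto
  next
    case (Suc n)
    then obtain xs where "xs \<in> argmin_f f" "xs j \<ge> x0 j + int n" by auto
    with step obtain xs' where "xs' \<in> argmin_f f" "xs' j = xs j + 1" by blast
    then show ?case using \<open>xs j \<ge> x0 j + int n\<close> by (intro bexI[of _ xs']) auto
  qed
  from this[of "nat (y j - x0 j)"] obtain xs where "xs \<in> argmin_f f" "xs j \<ge> x0 j + int (nat (y j - x0 j))"
    by auto
  moreover have "x0 j < y j" using lt x0 by blast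
  ultimately show False using lt by force
qed

lemma down_lemma:
  fixes f :: "('n::finite \<Rightarrow> int) \<Rightarrow> ereal" and y :: "'n \<Rightarrow> int"
  assumes ssqm: "SSQM_nat f"
    and argmin_ne: "argmin_f f \<noteq> {}"
    and ydom: "f y < \<infinity>"
    and P: "\<forall>k. f y \<le> f (y + chi (Some i) - chi k)"
  shows "\<exists>xs\<in>argmin_f f. xs i \<le> y i"
proof (rule ccontr)
  assume "\<not> ?thesis"
  hence lt: "\<forall>xs\<in>argmin_f f. xs i > y i" by auto
  obtain x0 where x0: "x0 \<in> argmin_f f" using argmin_ne by auto
  have step: "\<exists>xs'\<in>argmin_f f. xs' i = xs i - 1" if xs: "xs \<in> argmin_f f" for xs
  proof -
    have xsmin: "\<And>z. f xs \<le> f z" using xs by (auto simp: argmin_f_def)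
    have "f xs < \<infinity>" using xsmin[of y] ydom by auto
    moreover have "xs i > y i" using lt xs by auto
    ultimately obtain k where k: "k = None \<or> (\<exists>j'. k = Some j' \<and> xs j' < y j')"
      and c: "f (xs - chi (Some i) + chi k) < f xs \<or>
            f (y + chi (Some i) - chi k) < f y \<or>
            (f (xs - chi (Some i) + chi k) = f xs \<and> f (y + chi (Some i) - chi k) = f y)"
      using ssqm ydom unfolding SSQM_nat_def dom_f_def by blast
    have ne: "chi k i = 0" using k \<open>xs i > y i\<close> by (auto simp: chi_app)
    have "f (y + chi (Some i) - chi k) \<ge> f y" using P by auto
    moreover have "f (xs - chi (Some i) + chi k) \<ge> f xs" using xsmin by auto
    ultimately have e: "f (xs - chi (Some i) + chi k) = f xs" using c by auto
    have "xs - chi (Some i) + chi k \<in> argmin_f f"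
      using e xsmin by (auto simp: argmin_f_def)
    moreover have "(xs - chi (Some i) + chi k) i = xs i - 1" using ne by (simp add: chi_app)
    ultimately show ?thesis by blast
  qed
  have "\<exists>xs\<in>argmin_f f. xs i \<le> x0 i - int n" for n
  proof (induction n)
    case 0 then show ?case using x0 by auto
  next
    case (Suc n)
    then obtain xs where "xs \<in> argmin_f f" "xs i \<le> x0 i - int n" by auto
    with step obtain xs' where "xs' \<in> argmin_f f" "xs' i = xs i - 1" by blast
    then show ?case using \<open>xs i \<le> x0 i - int n\<close> by (intro bexI[of _ xs']) auto
  qed
  from this[of "nat (x0 i - y i)"] obtain xs where "xs \<in> argmin_f f" "xs i \<le> x0 i - int (nat (x0 i - y i))"
    by auto
  moreover have "x0 i > y i" using lt x0 by blast
  ultimately show False using lt by force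
qed

theorem theorem3p1:
  fixes f :: "('n::finite \<Rightarrow> int) \<Rightarrow> ereal" and x :: "'n \<Rightarrow> int"
  assumes real_or_inf: "\<And>z. f z \<noteq> -\<infinity>"
    and ssqm: "SSQM_nat f"
    and argmin_ne: "argmin_f f \<noteq> {}"
    and xdom: "x \<in> dom_f f"
  shows
   "(\<forall>i j. (\<forall>j'. f (x - chi (Some i) + chi (Some j)) \<le> f (x - chi (Some i) + chi j')) \<longrightarrow>
       (\<exists>xs\<in>argmin_f f. (j \<noteq> i \<longrightarrow> xs j \<ge> x j + 1) \<and> (j = i \<longrightarrow> xs i \<ge> x i)))
  \<and> (\<forall>i j. (\<forall>i'. f (x - chi (Some i) + chi (Some j)) \<le> f (x - chi i' + chi (Some j))) \<longrightarrow>
       (\<exists>xs\<in>argmin_f f. (i \<noteq> j \<longrightarrow> xs i \<le> x i - 1) \<and> (i = j \<longrightarrow> xs j \<le> x j)))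
  \<and> (\<forall>j. (\<forall>j'. f (x + chi (Some j)) \<le> f (x + chi j')) \<longrightarrow>
       (\<exists>xs\<in>argmin_f f. xs j \<ge> x j + 1))
  \<and> (\<forall>i. (\<forall>i'. f (x - chi (Some i)) \<le> f (x - chi i')) \<longrightarrow>
       (\<exists>xs\<in>argmin_f f. xs i \<le> x i - 1))"
proof (intro conjI allI impI)
  have fx: "f x < \<infinity>" using xdom by (simp add: dom_f_def)
  fix i j
  assume H: "\<forall>j'. f (x - chi (Some i) + chi (Some j)) \<le> f (x - chi (Some i) + chi j')"
  let ?y = "x - chi (Some i) + chi (Some j)"
  have "f ?y \<le> f (x - chi (Some i) + chi (Some i))" using H by blast
  hence yd: "f ?y < \<infinity>" using fx by auto
  have eq: "?y - chi (Some j) + chi k = x - chi (Some i) + chi k" for k by (rule ext) simp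
  have P: "\<forall>k. f ?y \<le> f (?y - chi (Some j) + chi k)" unfolding eq by (rule H)
  obtain xs where "xs \<in> argmin_f f" "xs j \<ge> ?y j"
    using up_lemma[OF ssqm argmin_ne yd P] by blast
  then show "\<exists>xs\<in>argmin_f f. (j \<noteq> i \<longrightarrow> xs j \<ge> x j + 1) \<and> (j = i \<longrightarrow> xs i \<ge> x i)"
    by (intro bexI[of _ xs]) (auto simp: chi_app)
next
  have fx: "f x < \<infinity>" using xdom by (simp add: dom_f_def)
  fix i j
  assume H: "\<forall>i'. f (x - chi (Some i) + chi (Some j)) \<le> f (x - chi i' + chi (Some j))"
  let ?y = "x - chi (Some i) + chi (Some j)"
  have "f ?y \<le> f (x - chi (Some j) + chi (Some j))" using H by blast
  hence yd: "f ?y < \<infinity>" using fx by auto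
  have eq: "?y + chi (Some i) - chi k = x - chi k + chi (Some j)" for k by (rule ext) simp
  have P: "\<forall>k. f ?y \<le> f (?y + chi (Some i) - chi k)" unfolding eq by (rule H)
  obtain xs where "xs \<in> argmin_f f" "xs i \<le> ?y i"
    using down_lemma[OF ssqm argmin_ne yd P] by blast
  then show "\<exists>xs\<in>argmin_f f. (i \<noteq> j \<longrightarrow> xs i \<le> x i - 1) \<and> (i = j \<longrightarrow> xs j \<le> x j)"
    by (intro bexI[of _ xs]) (auto simp: chi_app)
next
  have fx: "f x < \<infinity>" using xdom by (simp add: dom_f_def)
  fix j
  assume H: "\<forall>j'. f (x + chi (Some j)) \<le> f (x + chi j')"
  let ?y = "x + chi (Some j)"
  have "f ?y \<le> f (x + chi None)" using H by blast
  hence yd: "f ?y < \<infinity>" using fx by (metis chi_None_add order.strict_trans1)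
  have eq: "?y - chi (Some j) + chi k = x + chi k" for k by (rule ext) simp
  have P: "\<forall>k. f ?y \<le> f (?y - chi (Some j) + chi k)" unfolding eq by (rule H)
  obtain xs where "xs \<in> argmin_f f" "xs j \<ge> ?y j"
    using up_lemma[OF ssqm argmin_ne yd P] by blast
  then show "\<exists>xs\<in>argmin_f f. xs j \<ge> x j + 1"
    by (intro bexI[of _ xs]) (auto simp: chi_app)
next
  have fx: "f x < \<infinity>" using xdom by (simp add: dom_f_def)
  fix i
  assume H: "\<forall>i'. f (x - chi (Some i)) \<le> f (x - chi i')"
  let ?y = "x - chi (Some i)"
  have "f ?y \<le> f (x - chi None)" using H by blast
  hence yd: "f ?y < \<infinity>" using fx by (metis chi_None_add order.strict_trans1)
  have eq: "?y + chi (Some i) - chi k = x - chi k" for k by (rule ext) simp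
  have P: "\<forall>k. f ?y \<le> f (?y + chi (Some i) - chi k)" unfolding eq by (rule H)
  obtain xs where "xs \<in> argmin_f f" "xs i \<le> ?y i"
    using down_lemma[OF ssqm argmin_ne yd P] by blast
  then show "\<exists>xs\<in>argmin_f f. xs i \<le> x i - 1"
    by (intro bexI[of _ xs]) (auto simp: chi_app)
qed

end
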